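(* Let $p\ge 2$, $\alpha=p-1$, $0<R<\infty$, $\theta\ge\alpha$, $0\le\nu<\lambda_{\alpha,\theta}$. For each $\varepsilon\in(0,\mu_{\alpha,\theta})$ let $u_\varepsilon\in X^{1,p}_R(\alpha,\theta)\cap C^1[0,R]$ be a nonnegative function with $H_\nu(u_\varepsilon)=1$ and $\int_0^R e^{\mu_\varepsilon u_\varepsilon^{p/(p-1)}}\mathrm d\lambda_\theta=S_\varepsilon(p,\nu,\theta,R)$. Suppose that, along a sequence $\varepsilon\to0$, $u_\varepsilon\rightharpoonup u_0$ weakly in $X^{1,p}_R(\alpha,\theta)$, $u_\varepsilon\to u_0$ in $L^q_\theta$ for every $q>1$ and a.e. in $(0,R)$. If $u_0\equiv0$, then $(u_\varepsilon)$ concentrates at the origin: $H_\nu(u_\varepsilon)=1$, $u_\varepsilon\rightharpoonup0$ in $X^{1,p}_R(\alpha,\theta)$, and $$\lim_{\varepsilon\to0}\int_{r_0}^R|u_\varepsilon'|^p\,\mathrm d\lambda_\alpha=0\quad\text{for every }r_0>0.$$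
   Context: For $s\ge 0$ let $\omega_s=\frac{2\pi^{s/2}}{\Gamma(s/2)}$ and let $\mathrm d\lambda_s=\omega_s r^s\,\mathrm dr$ on $(0,R)$; $L^q_s=L^q((0,R),\mathrm d\lambda_s)$. The space $X^{1,p}_R(\alpha,\theta)$ is the completion of the set of all $u\in AC_{loc}(0,R)$ with $\lim_{r\to R}u(r)=0$, $u\in L^p_\theta$, $u'\in L^p_\alpha$, with respect to the norm $\|u\|=(\|u\|^p_{L^p_\theta}+\|u'\|^p_{L^p_\alpha})^{1/p}$. Set $\mu_{\alpha,\theta}=(\theta+1)\omega_\alpha^{1/\alpha}$, $\lambda_{\alpha,\theta}=\inf_{u\in X^{1,p}_R(\alpha,\theta)\setminus\{0\}}\|u'\|^p_{L^p_\alpha}/\|u\|^p_{L^p_\theta}$, and $H_\nu(u)=(\|u'\|^p_{L^p_\alpha}-\nu\|u\|^p_{L^p_\theta})^{1/p}$. Let $\mu_\varepsilon=\mu_{\alpha,\theta}-\varepsilon$ and $S_\varepsilon(p,\nu,\theta,R)=\sup_{u\in X^{1,p}_R(\alpha,\theta),\,H_\nu(u)\le1}\int_0^R e^{\mu_\varepsilon|u|^{p/(p-1)}}\mathrm d\lambda_\theta$. *)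

theory Defs
  imports "HOL-Analysis.Analysis"
begin

definition omega :: "real \<Rightarrow> real" where
  "omega s = 2 * pi powr (s / 2) / Gamma (s / 2)"

definition lam :: "real \<Rightarrow> real \<Rightarrow> real measure" where
  "lam R s = density (lebesgue_on {0<..<R}) (\<lambda>r. ennreal (omega s * r powr s))"

definition abs_cont_on :: "real \<Rightarrow> real \<Rightarrow> (real \<Rightarrow> real) \<Rightarrow> bool" where
  "abs_cont_on a b u \<longleftrightarrow>
     (\<forall>e>0. \<exists>d>0. \<forall>(n::nat) (c::nat \<Rightarrow> real) (d'::nat \<Rightarrow> real).
        (\<forall>i<n. a \<le> c i \<and> c i \<le> d' i \<and> d' i \<le> b) \<longrightarrow>
        (\<forall>i<n. \<forall>j<n. i \<noteq> j \<longrightarrow> d' i \<le> c j \<or> d' j \<le> c i) \<longrightarrow>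
        (\<Sum>i<n. d' i - c i) < d \<longrightarrow>
        (\<Sum>i<n. \<bar>u (d' i) - u (c i)\<bar>) < e)"

definition AC_loc :: "real \<Rightarrow> (real \<Rightarrow> real) \<Rightarrow> bool" where
  "AC_loc R u \<longleftrightarrow> (\<forall>a b. 0 < a \<and> a \<le> b \<and> b < R \<longrightarrow> abs_cont_on a b u)"

definition pnorm_pow :: "real measure \<Rightarrow> real \<Rightarrow> (real \<Rightarrow> real) \<Rightarrow> ennreal" where
  "pnorm_pow M p f = (\<integral>\<^sup>+ r. ennreal (\<bar>f r\<bar> powr p) \<partial>M)"

text \<open>The generating space: AC_loc functions vanishing at R with u in L^p_theta and u' in L^p_alpha.
  The a.e. derivative of u is taken as deriv u. X^{1,p}_R(alpha,theta) is the completion of this.\<close>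
definition X0 :: "real \<Rightarrow> real \<Rightarrow> real \<Rightarrow> real \<Rightarrow> (real \<Rightarrow> real) set" where
  "X0 p R alpha theta = {u. AC_loc R u \<and> (u \<longlongrightarrow> 0) (at_left R)
      \<and> pnorm_pow (lam R theta) p u < \<infinity> \<and> pnorm_pow (lam R alpha) p (deriv u) < \<infinity>}"

definition Xnorm :: "real \<Rightarrow> real \<Rightarrow> real \<Rightarrow> real \<Rightarrow> (real \<Rightarrow> real) \<Rightarrow> real" where
  "Xnorm p R alpha theta u =
     (enn2real (pnorm_pow (lam R theta) p u) + enn2real (pnorm_pow (lam R alpha) p (deriv u))) powr (1 / p)"

text \<open>Weak convergence in X^{1,p}_R(alpha,theta) of elements of the dense subspace X0:
  continuous linear functionals on the completion are exactly the bounded linear functionals on X0.\<close>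
definition weak_conv_X :: "real \<Rightarrow> real \<Rightarrow> real \<Rightarrow> real \<Rightarrow> (nat \<Rightarrow> real \<Rightarrow> real) \<Rightarrow> (real \<Rightarrow> real) \<Rightarrow> bool" where
  "weak_conv_X p R alpha theta u v \<longleftrightarrow>
     (\<forall>T :: (real \<Rightarrow> real) \<Rightarrow> real.
        (\<forall>f\<in>X0 p R alpha theta. \<forall>g\<in>X0 p R alpha theta. \<forall>a b. T (\<lambda>r. a * f r + b * g r) = a * T f + b * T g)
        \<and> (\<exists>C. \<forall>f\<in>X0 p R alpha theta. \<bar>T f\<bar> \<le> C * Xnorm p R alpha theta f)
        \<longrightarrow> (\<lambda>n. T (u n)) \<longlonglongrightarrow> T v)"

definition mu_const :: "real \<Rightarrow> real \<Rightarrow> real" where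
  "mu_const alpha theta = (theta + 1) * omega alpha powr (1 / alpha)"

definition lambda_const :: "real \<Rightarrow> real \<Rightarrow> real \<Rightarrow> real \<Rightarrow> real" where
  "lambda_const p R alpha theta =
     Inf ((\<lambda>u. enn2real (pnorm_pow (lam R alpha) p (deriv u)) / enn2real (pnorm_pow (lam R theta) p u))
          ` {u \<in> X0 p R alpha theta. enn2real (pnorm_pow (lam R theta) p u) \<noteq> 0})"

definition H :: "real \<Rightarrow> real \<Rightarrow> real \<Rightarrow> real \<Rightarrow> real \<Rightarrow> (real \<Rightarrow> real) \<Rightarrow> real" where
  "H p R alpha theta nu u =
     (enn2real (pnorm_pow (lam R alpha) p (deriv u)) - nu * enn2real (pnorm_pow (lam R theta) p u)) powr (1 / p)"

definition TM_integral :: "real \<Rightarrow> real \<Rightarrow> real \<Rightarrow> real \<Rightarrow> (real \<Rightarrow> real) \<Rightarrow> ennreal" where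
  "TM_integral p R theta mu u = (\<integral>\<^sup>+ r. ennreal (exp (mu * \<bar>u r\<bar> powr (p / (p - 1)))) \<partial>lam R theta)"

definition S_eps :: "real \<Rightarrow> real \<Rightarrow> real \<Rightarrow> real \<Rightarrow> real \<Rightarrow> real \<Rightarrow> ennreal" where
  "S_eps p R alpha theta nu eps =
     (SUP u \<in> {u \<in> X0 p R alpha theta. H p R alpha theta nu u \<le> 1}.
        TM_integral p R theta (mu_const alpha theta - eps) u)"

end

theory Submission
  imports Defs
begin

lemma young_pt:
  fixes p Y L s d :: real
  assumes p: "p > 1" and Y: "Y > 0" and L: "L > 0" and s: "s > 0" and d: "d \<ge> 0"
  shows "d / (Y powr (1/p) * L powr (1 - 1/p))
          \<le> (d powr p * s powr (p-1)) / (p*Y) + 1 / ((p/(p-1)) * L * s)"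
proof -
  define q where "q = p/(p-1)"
  have q1: "q > 1" using p by (simp add: q_def)
  have pq: "1/p + 1/q = 1" using p by (simp add: q_def field_simps)
  define x where "x = d * s powr ((p-1)/p) / Y powr (1/p)"
  define y where "y = s powr (-((p-1)/p)) / L powr (1 - 1/p)"
  have x0: "x \<ge> 0" using d by (simp add: x_def)
  have y0: "y \<ge> 0" by (simp add: y_def)
  have "x * y = d / (Y powr (1/p) * L powr (1 - 1/p))"
    using s by (simp add: x_def y_def powr_minus field_simps)
  moreover have "x powr p = d powr p * s powr (p-1) / Y"
    using p s Y d by (simp add: x_def powr_divide powr_mult powr_powr)
  moreover have "y powr q = 1 / (L * s)"
  proof -
    have "y powr q = (s powr (-((p-1)/p))) powr q / (L powr (1 - 1/p)) powr q"
      by (simp add: y_def powr_divide)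
    also have "\<dots> = s powr (-1) / L"
      using p L by (simp add: powr_powr q_def field_simps)
    finally show ?thesis using s L by (simp add: powr_minus field_simps)
  qed
  moreover have "x * y \<le> x powr p / p + y powr q / q"
    by (rule Youngs_inequality[OF p q1 pq x0 y0])
  ultimately show ?thesis by (simp add: q_def field_simps)
qed

lemma integral_inv_s:
  fixes a b :: real assumes "0 < a" "a \<le> b"
  shows "((\<lambda>s. 1 / s) has_integral (ln b - ln a)) {a..b}"
proof -
  have "((\<lambda>s. 1 / s) has_integral (ln b - ln a)) {a..b}"
    apply (rule fundamental_theorem_of_calculus)
    using assms by (auto intro!: derivative_eq_intros simp: has_real_derivative_iff_has_vector_derivative[symmetric] field_simps)
  then show ?thesis .
qed

lemma young_int:
  fixes p Y a b :: real and D :: "real \<Rightarrow> real"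
  assumes p: "p > 1" and a: "0 < a" and ab: "a < b" and D: "continuous_on {a..b} D"
    and Y: "Y > 0" and hY: "integral {a..b} (\<lambda>s. \<bar>D s\<bar> powr p * s powr (p-1)) \<le> Y"
  shows "integral {a..b} (\<lambda>s. \<bar>D s\<bar>) \<le> Y powr (1/p) * ln (b/a) powr (1 - 1/p)"
proof -
  define L where "L = ln (b/a)"
  have L: "L > 0" using a ab by (simp add: L_def)
  define c where "c = Y powr (1/p) * L powr (1 - 1/p)"
  have c: "c > 0" using Y L by (simp add: c_def)
  define q where "q = p/(p-1)"
  have q: "q > 0" using p by (simp add: q_def)
  have Lab: "ln b - ln a = L" using a ab by (simp add: L_def ln_div)
  have cD: "continuous_on {a..b} (\<lambda>s. \<bar>D s\<bar>)" by (intro continuous_intros D)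
  have ch: "continuous_on {a..b} (\<lambda>s. \<bar>D s\<bar> powr p * s powr (p-1))"
    using a p by (intro continuous_intros continuous_on_powr' D) auto
  have ci: "continuous_on {a..b} (\<lambda>s. 1 / s)" using a by (intro continuous_intros) auto
  have i1: "(\<lambda>s. \<bar>D s\<bar>) integrable_on {a..b}" by (rule integrable_continuous_interval[OF cD])
  have ih: "(\<lambda>s. \<bar>D s\<bar> powr p * s powr (p-1)) integrable_on {a..b}" by (rule integrable_continuous_interval[OF ch])
  have ii: "(\<lambda>s. 1 / s) integrable_on {a..b}" by (rule integrable_continuous_interval[OF ci])
  define k1 where "k1 = 1/(p*Y)"
  define k2 where "k2 = 1/(q*L)"
  have ih1: "(\<lambda>s. k1 * (\<bar>D s\<bar> powr p * s powr (p-1))) integrable_on {a..b}"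
    using integrable_on_cmult_left[OF ih, of k1] by simp
  have ii1: "(\<lambda>s. k2 * (1 / s)) integrable_on {a..b}"
    using integrable_on_cmult_left[OF ii, of k2] by simp
  have "integral {a..b} (\<lambda>s. \<bar>D s\<bar> / c) \<le>
        integral {a..b} (\<lambda>s. k1 * (\<bar>D s\<bar> powr p * s powr (p-1)) + k2 * (1 / s))"
  proof (rule integral_le)
    show "(\<lambda>s. \<bar>D s\<bar> / c) integrable_on {a..b}" using i1 by (rule integrable_on_divide)
    show "(\<lambda>s. k1 * (\<bar>D s\<bar> powr p * s powr (p-1)) + k2 * (1 / s)) integrable_on {a..b}"
      using ih1 ii1 by (rule integrable_add)
    fix s assume "s \<in> {a..b}"
    then have "s > 0" using a by auto
    from young_pt[OF p Y L this, of "\<bar>D s\<bar>"]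
    show "\<bar>D s\<bar> / c \<le> k1 * (\<bar>D s\<bar> powr p * s powr (p-1)) + k2 * (1 / s)"
      by (simp add: c_def q_def k1_def k2_def)
  qed
  also have "\<dots> = k1 * integral {a..b} (\<lambda>s. \<bar>D s\<bar> powr p * s powr (p-1)) + k2 * integral {a..b} (\<lambda>s. 1 / s)"
    by (subst integral_add[OF ih1 ii1]) (simp only: integral_mult[OF ih, symmetric] integral_mult[OF ii, symmetric])
  also have "\<dots> = k1 * integral {a..b} (\<lambda>s. \<bar>D s\<bar> powr p * s powr (p-1)) + (1/(q*L)) * (ln b - ln a)"
    using integral_unique[OF integral_inv_s[OF a, of b]] ab by (simp add: k2_def)
  also have "\<dots> \<le> Y / (p*Y) + 1/q"
    using divide_right_mono[OF hY, of "p*Y"] p Y L Lab by (simp add: k1_def)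
  also have "\<dots> = 1" using p Y by (simp add: q_def field_simps)
  finally have "integral {a..b} (\<lambda>s. \<bar>D s\<bar>) / c \<le> 1" by simp
  then show ?thesis using c by (simp add: c_def L_def field_simps)
qed

lemma dens_meas: "(\<lambda>r. ennreal (omega s * r powr s)) \<in> borel_measurable (lebesgue_on {0<..<R})"
proof -
  have "continuous_on {0<..<R} (\<lambda>r. omega s * r powr s)"
    by (intro continuous_intros) auto
  then have "(\<lambda>r. omega s * r powr s) \<in> borel_measurable (lebesgue_on {0<..<R})"
    by (rule continuous_imp_measurable_on_sets_lebesgue) auto
  then show ?thesis by measurable
qed

lemma id_meas_lo [measurable]: "(\<lambda>x::real. x) \<in> borel_measurable (lebesgue_on {0<..<R})"
  by (rule continuous_imp_measurable_on_sets_lebesgue) (auto intro: continuous_intros)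

lemma lam_nn:
  assumes f: "f \<in> borel_measurable (lebesgue_on {0<..<R})"
  shows "(\<integral>\<^sup>+ x. f x \<partial>lam R s) =
         (\<integral>\<^sup>+ x. ennreal (omega s * x powr s) * f x * indicator {0<..<R} x \<partial>lebesgue)"
  unfolding lam_def
  by (subst nn_integral_density[OF dens_meas f], subst nn_integral_restrict_space) auto

lemma sets_lam [measurable_cong]: "sets (lam R s) = sets (lebesgue_on {0<..<R})"
  by (simp add: lam_def)

lemma space_lam: "space (lam R s) = {0<..<R}"
  by (simp add: lam_def)

lemma hk_le_lam:
  fixes D g :: "real \<Rightarrow> real"
  assumes a: "0 < a" and ab: "a < b" and bR: "b \<le> R" and D: "continuous_on {a..b} D"
    and gD: "\<And>x. x \<in> {a<..<b} \<Longrightarrow> g x = D x"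
    and gm: "g \<in> borel_measurable (lebesgue_on {0<..<R})"
    and om: "0 \<le> omega s" and p: "p > 0"
  shows "ennreal (omega s * integral {a..b} (\<lambda>x. \<bar>D x\<bar> powr p * x powr s))
         \<le> (\<integral>\<^sup>+ x. ennreal (\<bar>g x\<bar> powr p) * indicator {a..b} x \<partial>lam R s)"
proof -
  define h where "h = (\<lambda>x. \<bar>D x\<bar> powr p * x powr s)"
  have ch: "continuous_on {a..b} h"
    unfolding h_def using a p by (intro continuous_intros continuous_on_powr' D) auto
  have "(h has_integral integral {a..b} h) {a..b}"
    by (rule integrable_integral[OF integrable_continuous_interval[OF ch]])
  then have "(h has_integral integral {a..b} h) {a<..<b}"
    by (simp add: has_integral_Icc_iff_Ioo)
  then have hm: "((\<lambda>x. omega s * h x) has_integral (omega s * integral {a..b} h)) {a<..<b}"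
    by (rule has_integral_mult_right)
  have hi: "((\<lambda>x. indicator {a<..<b} x * (omega s * h x)) has_integral (omega s * integral {a..b} h)) UNIV"
  proof -
    have "(\<lambda>x. indicator {a<..<b} x * (omega s * h x)) = (\<lambda>x. if x \<in> {a<..<b} then omega s * h x else 0)"
      by (auto simp: indicator_def)
    then show ?thesis using has_integral_restrict_UNIV[of "{a<..<b}" "\<lambda>x. omega s * h x"] hm by simp
  qed
  have nn: "\<And>x. 0 \<le> indicator {a<..<b} x * (omega s * h x)"
    using om by (simp add: h_def)
  have "ennreal (omega s * integral {a..b} h) =
        (\<integral>\<^sup>+ x. ennreal (indicator {a<..<b} x * (omega s * h x)) \<partial>lebesgue)"
    using has_integral_iff_nn_integral_lebesgue[of "\<lambda>x. indicator {a<..<b} x * (omega s * h x)", OF nn] hi by simp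
  also have "\<dots> \<le> (\<integral>\<^sup>+ x. ennreal (omega s * x powr s) * (ennreal (\<bar>g x\<bar> powr p) * indicator {a..b} x) * indicator {0<..<R} x \<partial>lebesgue)"
  proof (rule nn_integral_mono)
    fix x
    show "ennreal (indicator {a<..<b} x * (omega s * h x)) \<le> ennreal (omega s * x powr s) * (ennreal (\<bar>g x\<bar> powr p) * indicator {a..b} x) * indicator {0<..<R} x"
    proof (cases "x \<in> {a<..<b}")
      case True
      then have "x \<in> {a..b}" "x \<in> {0<..<R}" using a bR by auto
      then show ?thesis using True gD[OF True] om
        by (simp add: h_def ennreal_mult[symmetric] mult_ac)
    qed simp
  qed
  also have "\<dots> = (\<integral>\<^sup>+ x. ennreal (\<bar>g x\<bar> powr p) * indicator {a..b} x \<partial>lam R s)"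
    by (rule lam_nn[symmetric]) (use gm in measurable)
  finally show ?thesis by (simp add: h_def)
qed

lemma ptbound:
  fixes u D g :: "real \<Rightarrow> real" and p R a b Yn :: real
  assumes p: "p > 1" and a: "0 < a" and ab: "a < b" and bR: "b \<le> R"
    and Dc: "continuous_on {0..R} D"
    and uD: "\<forall>x\<in>{0..R}. (u has_real_derivative D x) (at x within {0..R})"
    and gD: "\<And>x. x \<in> {0<..<R} \<Longrightarrow> g x = D x"
    and gm: "g \<in> borel_measurable (lebesgue_on {0<..<R})"
    and om: "0 < omega (p-1)" and Yn: "Yn > 0"
    and bnd: "(\<integral>\<^sup>+ x. ennreal (\<bar>g x\<bar> powr p) * indicator {a..b} x \<partial>lam R (p-1)) \<le> ennreal Yn"
  shows "\<bar>u a\<bar> \<le> \<bar>u b\<bar> + (Yn / omega (p-1)) powr (1/p) * ln (b/a) powr (1 - 1/p)"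
proof -
  have sub: "{a..b} \<subseteq> {0..R}" using a bR by auto
  have Dab: "continuous_on {a..b} D" using continuous_on_subset[OF Dc sub] .
  have "ennreal (omega (p-1) * integral {a..b} (\<lambda>x. \<bar>D x\<bar> powr p * x powr (p-1))) \<le> ennreal Yn"
    using hk_le_lam[OF a ab bR Dab _ gm, of "p-1" p] gD a bR om p bnd by (auto intro: order_trans)
  then have "omega (p-1) * integral {a..b} (\<lambda>x. \<bar>D x\<bar> powr p * x powr (p-1)) \<le> Yn"
    using Yn by (simp add: ennreal_le_iff)
  then have I: "integral {a..b} (\<lambda>x. \<bar>D x\<bar> powr p * x powr (p-1)) \<le> Yn / omega (p-1)"
    using om by (simp add: field_simps)
  have Y: "Yn / omega (p-1) > 0" using Yn om by simp
  have y: "integral {a..b} (\<lambda>s. \<bar>D s\<bar>) \<le> (Yn / omega (p-1)) powr (1/p) * ln (b/a) powr (1 - 1/p)"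
    by (rule young_int[OF p a ab Dab Y I])
  have "(D has_integral (u b - u a)) {a..b}"
  proof (rule fundamental_theorem_of_calculus)
    show "a \<le> b" using ab by simp
    fix x assume "x \<in> {a..b}"
    then have "(u has_real_derivative D x) (at x within {0..R})" using uD sub by auto
    then have "(u has_real_derivative D x) (at x within {a..b})" by (rule has_field_derivative_subset[OF _ sub])
    then show "(u has_vector_derivative D x) (at x within {a..b})"
      by (simp add: has_real_derivative_iff_has_vector_derivative)
  qed
  then have "\<bar>u b - u a\<bar> \<le> integral {a..b} (\<lambda>s. \<bar>D s\<bar>)"
    using Henstock_Kurzweil_Integration.integral_norm_bound_integral[of D "{a..b}" "\<lambda>s. \<bar>D s\<bar>"]
      integrable_continuous_interval[OF Dab] integrable_continuous_interval[of a b "\<lambda>s. \<bar>D s\<bar>"] Dab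
    by (auto simp: integral_unique intro: continuous_intros)
  then show ?thesis using y by linarith
qed

lemma dom_bound:
  fixes x K bb t mu mu' L r0 r q :: real
  assumes q: "q > 0" and K: "K \<ge> 0" and bb: "bb \<ge> 0" and t: "t > 1"
    and mu: "0 \<le> mu'" "mu' \<le> mu" and r: "0 < r" and r0: "0 < r0"
    and hx: "r0 \<le> r \<Longrightarrow> \<bar>x\<bar> \<le> K"
    and hx2: "r < r0 \<Longrightarrow> \<bar>x\<bar> \<le> K + bb * ln (r0/r) powr (1/q)"
  shows "exp (mu' * \<bar>x\<bar> powr q) \<le> exp (mu * (K*t/(t-1)) powr q)
           + r0 powr (mu * t powr q * bb powr q) * r powr (-(mu * t powr q * bb powr q))"
proof -
  define M where "M = K*t/(t-1)"
  have KM: "K \<le> M" using K t by (simp add: M_def field_simps)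
  have mu0: "mu \<ge> 0" using mu by simp
  have case1: "exp (mu' * \<bar>x\<bar> powr q) \<le> exp (mu * M powr q)" if "\<bar>x\<bar> \<le> M"
  proof -
    have "\<bar>x\<bar> powr q \<le> M powr q" using that q by (intro powr_mono2) auto
    then have "mu' * \<bar>x\<bar> powr q \<le> mu * M powr q"
      using mu by (intro mult_mono) auto
    then show ?thesis by simp
  qed
  have pos: "0 \<le> r0 powr (mu * t powr q * bb powr q) * r powr (-(mu * t powr q * bb powr q))" by simp
  show ?thesis
  proof (cases "r0 \<le> r")
    case True
    then have "\<bar>x\<bar> \<le> M" using hx KM by linarith
    then have "exp (mu' * \<bar>x\<bar> powr q) \<le> exp (mu * M powr q)" by (rule case1)
    then show ?thesis using pos unfolding M_def by linarith
  next
    case False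
    then have rr: "r < r0" by simp
    define L where "L = ln (r0/r)"
    have L: "L > 0" using rr r by (simp add: L_def)
    have xb: "\<bar>x\<bar> \<le> K + bb * L powr (1/q)" using hx2[OF rr] by (simp add: L_def)
    show ?thesis
    proof (cases "bb * L powr (1/q) \<le> K/(t-1)")
      case True
      have "K + K/(t-1) = M" using t by (simp add: M_def field_simps)
      then have "\<bar>x\<bar> \<le> M" using xb True by linarith
      then have "exp (mu' * \<bar>x\<bar> powr q) \<le> exp (mu * M powr q)" by (rule case1)
      then show ?thesis using pos unfolding M_def by linarith
    next
      case False
      then have "K < (t-1) * (bb * L powr (1/q))" using t by (simp add: field_simps)
      then have "\<bar>x\<bar> \<le> t * (bb * L powr (1/q))" using xb by (simp add: algebra_simps)
      then have "\<bar>x\<bar> powr q \<le> (t * (bb * L powr (1/q))) powr q" using q by (intro powr_mono2) auto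
      also have "\<dots> = t powr q * bb powr q * L" using q t bb L
        by (simp add: powr_mult powr_powr)
      finally have "mu' * \<bar>x\<bar> powr q \<le> mu * (t powr q * bb powr q * L)"
        using mu by (intro mult_mono) auto
      then have "exp (mu' * \<bar>x\<bar> powr q) \<le> exp ((mu * t powr q * bb powr q) * L)" by (simp add: mult_ac)
      also have "\<dots> = (r0/r) powr (mu * t powr q * bb powr q)"
        using r r0 by (simp add: powr_def L_def mult_ac)
      also have "\<dots> = r0 powr (mu * t powr q * bb powr q) * r powr (-(mu * t powr q * bb powr q))"
        using r r0 by (simp add: powr_divide powr_minus_divide)
      finally show ?thesis by (smt (verit) exp_gt_zero)
    qed
  qed
qed

lemma deriv_eq:
  assumes x: "x \<in> {0<..<R}"
    and uD: "\<forall>x\<in>{0..R}. (u has_real_derivative D x) (at x within {0..R})"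
  shows "deriv u x = D x" and "(u has_real_derivative D x) (at x)"
proof -
  have "x \<in> interior {0..R}" using x by simp
  then have "at x within {0..R} = at x" by (rule at_within_interior)
  moreover have "(u has_real_derivative D x) (at x within {0..R})" using uD x by auto
  ultimately show *: "(u has_real_derivative D x) (at x)" by simp
  then show "deriv u x = D x" by (rule DERIV_imp_deriv)
qed

lemma uR0:
  assumes R: "0 < R"
    and uD: "\<forall>x\<in>{0..R}. (u has_real_derivative D x) (at x within {0..R})"
    and lim: "(u \<longlongrightarrow> 0) (at_left R)"
  shows "u R = 0"
proof -
  have "(u has_real_derivative D R) (at R within {0..R})" using uD R by auto
  then have "continuous (at R within {0..R}) u" by (rule DERIV_continuous)
  then have "(u \<longlongrightarrow> u R) (at R within {0..R})" by (simp add: continuous_within)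
  then have "(u \<longlongrightarrow> u R) (at_left R)" using at_within_Icc_at_left[OF R] by simp
  from tendsto_unique[OF _ this lim] show ?thesis by simp
qed

lemma g_meas:
  fixes D g :: "real \<Rightarrow> real"
  assumes Dc: "continuous_on {0..R} D" and gD: "\<And>x. x \<in> {0<..<R} \<Longrightarrow> g x = D x"
  shows "g \<in> borel_measurable (lebesgue_on {0<..<R})"
proof -
  have "continuous_on {0<..<R} D" by (rule continuous_on_subset[OF Dc]) (auto simp: less_imp_le)
  then have "D \<in> borel_measurable (lebesgue_on {0<..<R})"
    by (rule continuous_imp_measurable_on_sets_lebesgue) auto
  moreover have "\<And>x. x \<in> space (lebesgue_on {0<..<R}) \<Longrightarrow> g x = D x" using gD by simp
  ultimately show ?thesis using measurable_cong[of "lebesgue_on {0<..<R}" g D] by simp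
qed

lemma pnorm_zero:
  assumes "\<forall>r\<in>{0<..<R}. v r = 0"
  shows "pnorm_pow (lam R s) p v = 0"
  unfolding pnorm_pow_def
  using assms by (subst nn_integral_cong[where v="\<lambda>_. 0"]) (auto simp: space_lam)

lemma zero_fun:
  fixes v :: "real \<Rightarrow> real"
  assumes R: "0 < R" and v: "\<forall>r\<in>{0<..<R}. v r = 0"
  shows "\<forall>r\<in>{0<..<R}. deriv v r = 0"
    and "v \<in> X0 p R alpha theta"
    and "Xnorm p R alpha theta v = 0"
    and "pnorm_pow (lam R s) p v = 0"
    and "pnorm_pow (lam R s) p (deriv v) = 0"
proof -
  show dv: "\<forall>r\<in>{0<..<R}. deriv v r = 0"
  proof
    fix r assume r: "r \<in> {0<..<R}"
    have "((\<lambda>_. 0::real) has_real_derivative 0) (at r)" by simp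
    then have "(v has_real_derivative 0) (at r)"
      by (rule has_field_derivative_transform_within_open[of _ _ _ "{0<..<R}"]) (use r v in auto)
    then show "deriv v r = 0" by (rule DERIV_imp_deriv)
  qed
  show p1: "pnorm_pow (lam R s) p v = 0" by (rule pnorm_zero[OF v])
  show p2: "pnorm_pow (lam R s) p (deriv v) = 0" by (rule pnorm_zero[OF dv])
  show "Xnorm p R alpha theta v = 0"
    unfolding Xnorm_def using pnorm_zero[OF v] pnorm_zero[OF dv] by simp
  have ac: "AC_loc R v"
    unfolding AC_loc_def abs_cont_on_def
  proof (intro allI impI)
    fix a b e :: real assume ab: "0 < a \<and> a \<le> b \<and> b < R" and e: "e > 0"
    show "\<exists>d>0. \<forall>(n::nat) (c::nat \<Rightarrow> real) (d'::nat \<Rightarrow> real).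
        (\<forall>i<n. a \<le> c i \<and> c i \<le> d' i \<and> d' i \<le> b) \<longrightarrow>
        (\<forall>i<n. \<forall>j<n. i \<noteq> j \<longrightarrow> d' i \<le> c j \<or> d' j \<le> c i) \<longrightarrow>
        (\<Sum>i<n. d' i - c i) < d \<longrightarrow>
        (\<Sum>i<n. \<bar>v (d' i) - v (c i)\<bar>) < e"
    proof (intro exI[of _ 1] conjI allI impI)
      fix n :: nat and c d' :: "nat \<Rightarrow> real"
      assume h: "\<forall>i<n. a \<le> c i \<and> c i \<le> d' i \<and> d' i \<le> b"
      have "(\<Sum>i<n. \<bar>v (d' i) - v (c i)\<bar>) = 0"
      proof (intro sum.neutral ballI)
        fix i assume "i \<in> {..<n}"
        then have "a \<le> c i \<and> c i \<le> d' i \<and> d' i \<le> b" using h by auto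
        then have "c i \<in> {0<..<R}" "d' i \<in> {0<..<R}" using ab by auto
        then show "\<bar>v (d' i) - v (c i)\<bar> = 0" using v by simp
      qed
      then show "(\<Sum>i<n. \<bar>v (d' i) - v (c i)\<bar>) < e" using e by simp
    qed simp
  qed
  have "(v \<longlongrightarrow> 0) (at_left R) \<longleftrightarrow> ((\<lambda>_. 0::real) \<longlongrightarrow> 0) (at_left R)"
  proof (rule tendsto_cong)
    show "\<forall>\<^sub>F x in at_left R. v x = 0"
      using v R by (auto simp: eventually_at_left_field intro!: exI[of _ 0])
  qed
  then have "(v \<longlongrightarrow> 0) (at_left R)" by simp
  then show "v \<in> X0 p R alpha theta"
    unfolding X0_def using ac pnorm_zero[OF v] pnorm_zero[OF dv] by simp
qed

lemma omega_pos: "s > 0 \<Longrightarrow> omega s > 0"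
  unfolding omega_def by (intro divide_pos_pos mult_pos_pos Gamma_real_pos) auto

lemma Hbound:
  assumes p: "p > 0" and H: "H p R alpha theta nu u = 1"
  shows "enn2real (pnorm_pow (lam R alpha) p (deriv u)) \<le> 1 + nu * enn2real (pnorm_pow (lam R theta) p u)"
proof -
  define x where "x = enn2real (pnorm_pow (lam R alpha) p (deriv u)) - nu * enn2real (pnorm_pow (lam R theta) p u)"
  have Hx: "x powr (1/p) = 1" using H by (simp add: H_def x_def)
  have "x \<le> 1"
  proof (cases "x > 0")
    case True
    have "x = (x powr (1/p)) powr p" using True p by (simp add: powr_powr)
    then show ?thesis using Hx by simp
  qed simp
  then show ?thesis by (simp add: x_def)
qed

lemma split_le:
  fixes g :: "real \<Rightarrow> real"
  assumes gm: "g \<in> borel_measurable (lebesgue_on {0<..<R})" and b: "b \<le> r0"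
  shows "(\<integral>\<^sup>+ x. ennreal (\<bar>g x\<bar> powr p) * indicator {a..b} x \<partial>lam R s)
       + (\<integral>\<^sup>+ x. ennreal (\<bar>g x\<bar> powr p) * indicator {r0<..<R} x \<partial>lam R s)
       \<le> (\<integral>\<^sup>+ x. ennreal (\<bar>g x\<bar> powr p) \<partial>lam R s)"
proof -
  have m1: "(\<lambda>x. ennreal (\<bar>g x\<bar> powr p) * indicator {a..b} x) \<in> borel_measurable (lam R s)"
    using gm by measurable
  have m2: "(\<lambda>x. ennreal (\<bar>g x\<bar> powr p) * indicator {r0<..<R} x) \<in> borel_measurable (lam R s)"
    using gm by measurable
  have "(\<integral>\<^sup>+ x. ennreal (\<bar>g x\<bar> powr p) * indicator {a..b} x \<partial>lam R s)
       + (\<integral>\<^sup>+ x. ennreal (\<bar>g x\<bar> powr p) * indicator {r0<..<R} x \<partial>lam R s)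
       = (\<integral>\<^sup>+ x. ennreal (\<bar>g x\<bar> powr p) * indicator {a..b} x + ennreal (\<bar>g x\<bar> powr p) * indicator {r0<..<R} x \<partial>lam R s)"
    by (rule nn_integral_add[OF m1 m2, symmetric])
  also have "\<dots> \<le> (\<integral>\<^sup>+ x. ennreal (\<bar>g x\<bar> powr p) \<partial>lam R s)"
  proof (rule nn_integral_mono)
    fix x
    show "ennreal (\<bar>g x\<bar> powr p) * indicator {a..b} x + ennreal (\<bar>g x\<bar> powr p) * indicator {r0<..<R} x
          \<le> ennreal (\<bar>g x\<bar> powr p)"
      using b by (auto simp: indicator_def)
  qed
  finally show ?thesis .
qed

lemma w_finite:
  fixes theta beta C1 r0 R :: real
  assumes R: "0 < R" and th: "theta \<ge> 0" and be: "0 \<le> beta" "beta < theta + 1" and C1: "C1 \<ge> 0"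
    and om: "omega theta \<ge> 0"
  shows "(\<integral>\<^sup>+ r. ennreal (C1 + r0 powr beta * r powr (-beta)) \<partial>lam R theta) < \<infinity>"
proof -
  define f where "f = (\<lambda>r::real. omega theta * (C1 * r powr theta + r0 powr beta * r powr (theta - beta)))"
  have i1: "(\<lambda>r. r powr theta) integrable_on {0..R}" using th R by (intro integrable_on_powr_from_0) auto
  have i2: "(\<lambda>r. r powr (theta - beta)) integrable_on {0..R}" using be R by (intro integrable_on_powr_from_0) auto
  have j1: "(\<lambda>r. C1 * r powr theta) integrable_on {0..R}" using integrable_on_cmult_left[OF i1, of C1] by simp
  have j2: "(\<lambda>r. r0 powr beta * r powr (theta - beta)) integrable_on {0..R}"
    using integrable_on_cmult_left[OF i2, of "r0 powr beta"] by simp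
  have j3: "(\<lambda>r. C1 * r powr theta + r0 powr beta * r powr (theta - beta)) integrable_on {0..R}"
    using integrable_add[OF j1 j2] by simp
  have "f integrable_on {0..R}"
    unfolding f_def using integrable_on_cmult_left[OF j3, of "omega theta"] by simp
  then have "f integrable_on {0<..<R}" by (simp add: integrable_on_open_interval_real)
  then obtain I where hI: "(f has_integral I) {0<..<R}" by (auto simp: integrable_on_def)
  have hi: "((\<lambda>x. indicator {0<..<R} x * f x) has_integral I) UNIV"
  proof -
    have "(\<lambda>x. indicator {0<..<R} x * f x) = (\<lambda>x. if x \<in> {0<..<R} then f x else 0)"
      by (auto simp: indicator_def)
    then show ?thesis using has_integral_restrict_UNIV[of "{0<..<R}" f] hI by simp
  qed
  have nn: "\<And>x. 0 \<le> indicator {0<..<R} x * f x"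
    using om C1 by (auto simp: f_def indicator_def)
  have eq: "(\<integral>\<^sup>+ x. ennreal (indicator {0<..<R} x * f x) \<partial>lebesgue) = ennreal I"
    using has_integral_iff_nn_integral_lebesgue[of "\<lambda>x. indicator {0<..<R} x * f x", OF nn] hi by simp
  have m: "(\<lambda>r. ennreal (C1 + r0 powr beta * r powr (-beta))) \<in> borel_measurable (lebesgue_on {0<..<R})"
  proof -
    have "continuous_on {0<..<R} (\<lambda>r. C1 + r0 powr beta * r powr (-beta))"
      by (intro continuous_intros) auto
    then have "(\<lambda>r. C1 + r0 powr beta * r powr (-beta)) \<in> borel_measurable (lebesgue_on {0<..<R})"
      by (rule continuous_imp_measurable_on_sets_lebesgue) auto
    then show ?thesis by measurable
  qed
  have "(\<integral>\<^sup>+ r. ennreal (C1 + r0 powr beta * r powr (-beta)) \<partial>lam R theta)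
      = (\<integral>\<^sup>+ x. ennreal (omega theta * x powr theta) * ennreal (C1 + r0 powr beta * x powr (-beta)) * indicator {0<..<R} x \<partial>lebesgue)"
    by (rule lam_nn[OF m])
  also have "\<dots> = (\<integral>\<^sup>+ x. ennreal (indicator {0<..<R} x * f x) \<partial>lebesgue)"
  proof (rule nn_integral_cong)
    fix x
    show "ennreal (omega theta * x powr theta) * ennreal (C1 + r0 powr beta * x powr (-beta)) * indicator {0<..<R} x
        = ennreal (indicator {0<..<R} x * f x)"
    proof (cases "x \<in> {0<..<R}")
      case True
      then have "x > 0" by simp
      then have e: "x powr theta * (C1 + r0 powr beta * x powr (-beta)) = C1 * x powr theta + r0 powr beta * x powr (theta - beta)"
        by (simp add: algebra_simps powr_add[symmetric])
      have "ennreal (omega theta * x powr theta) * ennreal (C1 + r0 powr beta * x powr (-beta))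
          = ennreal (omega theta * x powr theta * (C1 + r0 powr beta * x powr (-beta)))"
        using om C1 by (intro ennreal_mult[symmetric]) auto
      also have "\<dots> = ennreal (f x)" using e by (simp add: f_def mult.assoc)
      finally show ?thesis using True by simp
    qed simp
  qed
  also have "\<dots> = ennreal I" by (rule eq)
  finally show ?thesis by simp
qed

lemma pos_gap:
  fixes u :: "real \<Rightarrow> real" and m q R theta :: real
  assumes R: "0 < R" and uc: "continuous_on {0..R} u"
    and x0: "x0 \<in> {0<..<R}" "u x0 > 0"
    and m: "m > 0" and th: "theta \<ge> 0" and om: "omega theta > 0" and q: "q > 0"
    and fin: "emeasure (lam R theta) (space (lam R theta)) < \<infinity>"
  shows "emeasure (lam R theta) (space (lam R theta)) < (\<integral>\<^sup>+ r. ennreal (exp (m * \<bar>u r\<bar> powr q)) \<partial>lam R theta)"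
proof -
  have "x0 \<in> interior {0..R}" using x0 by simp
  then have "continuous (at x0) u" by (rule continuous_on_interior[OF uc])
  then have "u \<midarrow>x0\<rightarrow> u x0" by (simp add: isCont_def)
  then obtain \<rho> where \<rho>: "\<rho> > 0" and h\<rho>: "\<And>y. y \<noteq> x0 \<and> norm (y - x0) < \<rho> \<Longrightarrow> norm (u y - u x0) < u x0 / 2"
    using x0(2) unfolding LIM_eq by (metis half_gt_zero)
  define \<sigma> where "\<sigma> = min (\<rho>/2) (min x0 (R - x0) / 2)"
  have \<sigma>: "\<sigma> > 0" using \<rho> x0 by (simp add: \<sigma>_def)
  define a where "a = x0 - \<sigma>"
  define b where "b = x0 + \<sigma>"
  have s1: "\<sigma> \<le> \<rho>/2" "\<sigma> \<le> x0/2" "\<sigma> \<le> (R - x0)/2" unfolding \<sigma>_def by (auto simp: min_def)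
  have a: "0 < a" and ab: "a < b" and bR: "b < R"
    using x0 \<sigma> s1 by (auto simp: a_def b_def)
  define c where "c = u x0 / 2"
  have c: "c > 0" using x0 by (simp add: c_def)
  have uab: "u y \<ge> c" if "y \<in> {a..b}" for y
  proof (cases "y = x0")
    case True then show ?thesis using c by (simp add: c_def)
  next
    case False
    have "norm (y - x0) < \<rho>" using that \<rho> s1 \<sigma> by (auto simp: a_def b_def)
    then have "norm (u y - u x0) < u x0 / 2" using h\<rho> False by blast
    then show ?thesis unfolding c_def real_norm_def by linarith
  qed
  define k where "k = exp (m * c powr q) - 1"
  have k: "k > 0" using m c q by (simp add: k_def)
  have mi: "(\<lambda>x. indicator {a..b} x :: ennreal) \<in> borel_measurable (lam R theta)"
    by measurable
  have "ennreal (omega theta * integral {a..b} (\<lambda>x. \<bar>1\<bar> powr 1 * x powr theta))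
      \<le> (\<integral>\<^sup>+ x. ennreal (\<bar>1\<bar> powr 1) * indicator {a..b} x \<partial>lam R theta)"
    by (rule hk_le_lam[of a b R "\<lambda>_. 1" "\<lambda>_. 1"]) (use a ab bR om in auto)
  then have J: "ennreal (omega theta * integral {a..b} (\<lambda>x. x powr theta)) \<le> (\<integral>\<^sup>+ x. indicator {a..b} x \<partial>lam R theta)"
    by simp
  have "integral {a..b} (\<lambda>x. a powr theta) \<le> integral {a..b} (\<lambda>x. x powr theta)"
  proof (rule integral_le)
    show "(\<lambda>x. x powr theta) integrable_on {a..b}"
      using a by (intro integrable_continuous_interval continuous_intros) auto
  qed (use a th in \<open>auto intro!: powr_mono2\<close>)
  then have intpos: "(b - a) * a powr theta \<le> integral {a..b} (\<lambda>x. x powr theta)" using ab by simp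
  define z where "z = k * (omega theta * ((b - a) * a powr theta))"
  have z: "z > 0" using k om a ab by (simp add: z_def)
  have "ennreal z \<le> ennreal k * (\<integral>\<^sup>+ x. indicator {a..b} x \<partial>lam R theta)"
  proof -
    have "ennreal z \<le> ennreal k * ennreal (omega theta * integral {a..b} (\<lambda>x. x powr theta))"
    proof -
      have "z \<le> k * (omega theta * integral {a..b} (\<lambda>x. x powr theta))"
        unfolding z_def using k om intpos by (intro mult_left_mono) auto
      moreover have "ennreal (k * (omega theta * integral {a..b} (\<lambda>x. x powr theta)))
          = ennreal k * ennreal (omega theta * integral {a..b} (\<lambda>x. x powr theta))"
        using k om intpos a ab by (intro ennreal_mult) (auto intro!: mult_nonneg_nonneg order_trans[OF _ intpos])
      ultimately show ?thesis by (metis ennreal_leI)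
    qed
    also have "\<dots> \<le> ennreal k * (\<integral>\<^sup>+ x. indicator {a..b} x \<partial>lam R theta)"
      by (rule mult_left_mono[OF J]) simp
    finally show ?thesis .
  qed
  obtain V where V: "emeasure (lam R theta) (space (lam R theta)) = ennreal V" "V \<ge> 0"
    using fin by (cases "emeasure (lam R theta) (space (lam R theta))") auto
  have "emeasure (lam R theta) (space (lam R theta)) < ennreal (V + z)"
    using V z by (simp add: ennreal_less_iff)
  also have "\<dots> = emeasure (lam R theta) (space (lam R theta)) + ennreal z"
    using V z by (simp add: ennreal_plus)
  also have "\<dots> \<le> (\<integral>\<^sup>+ x. 1 \<partial>lam R theta) + (\<integral>\<^sup>+ x. ennreal k * indicator {a..b} x \<partial>lam R theta)"
    using \<open>ennreal z \<le> _\<close> by (simp add: nn_integral_cmult[OF mi] add_left_mono)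
  also have "\<dots> = (\<integral>\<^sup>+ x. 1 + ennreal k * indicator {a..b} x \<partial>lam R theta)"
    by (rule nn_integral_add[symmetric]) (use mi in measurable)
  also have "\<dots> \<le> (\<integral>\<^sup>+ r. ennreal (exp (m * \<bar>u r\<bar> powr q)) \<partial>lam R theta)"
  proof (rule nn_integral_mono)
    fix r
    show "1 + ennreal k * indicator {a..b} r \<le> ennreal (exp (m * \<bar>u r\<bar> powr q))"
    proof (cases "r \<in> {a..b}")
      case True
      then have "c \<le> \<bar>u r\<bar>" using uab by force
      then have "c powr q \<le> \<bar>u r\<bar> powr q" using c q by (intro powr_mono2) auto
      then have "exp (m * c powr q) \<le> exp (m * \<bar>u r\<bar> powr q)" using m by simp
      then have "1 + k \<le> exp (m * \<bar>u r\<bar> powr q)" by (simp add: k_def)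
      then have "ennreal (1 + k) \<le> ennreal (exp (m * \<bar>u r\<bar> powr q))" by (rule ennreal_leI)
      then show ?thesis using True k by (simp add: ennreal_plus)
    next
      case False
      have "1 \<le> exp (m * \<bar>u r\<bar> powr q)" using m by simp
      then show ?thesis using False by simp
    qed
  qed
  finally show ?thesis .
qed

lemma beta_alg:
  fixes p om theta del :: real
  assumes p: "p > 1" and om: "om > 0" and th: "theta + 1 > 0" and d: "0 < del" "del \<le> 1"
  defines "\<kappa> \<equiv> (1 - del/2) powr (1/(p-1))"
  defines "q \<equiv> p/(p-1)"
  defines "t \<equiv> \<kappa> powr (-1/(2*q))"
  defines "bb \<equiv> ((1 - del/2)/om) powr (1/p)"
  shows "t > 1" and "(theta + 1) * om powr (1/(p-1)) * t powr q * bb powr q < theta + 1"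
    and "0 \<le> (theta + 1) * om powr (1/(p-1)) * t powr q * bb powr q"
proof -
  have d1: "0 < 1 - del/2" "1 - del/2 < 1" using d by auto
  have q: "q > 0" using p by (simp add: q_def)
  have k0: "\<kappa> > 0" using d1 by (simp add: \<kappa>_def)
  have k1: "\<kappa> < 1" unfolding \<kappa>_def using powr_less_mono2[of "1/(p-1)" "1 - del/2" 1] d1 p by simp
  show "t > 1" unfolding t_def using powr_less_mono2_neg[of "-1/(2*q)" \<kappa> 1] k0 k1 q by simp
  have tq: "t powr q = \<kappa> powr (-1/2)" unfolding t_def using k0 q by (simp add: powr_powr)
  have bq: "bb powr q = \<kappa> / om powr (1/(p-1))"
    unfolding bb_def \<kappa>_def using d1 om p by (simp add: powr_powr q_def powr_divide)
  have "(theta + 1) * om powr (1/(p-1)) * t powr q * bb powr q = (theta + 1) * (\<kappa> powr (-1/2) * \<kappa>)"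
    using om by (simp add: tq bq)
  also have "\<kappa> powr (-1/2) * \<kappa> = \<kappa> powr (1/2)"
    using k0 powr_add[of \<kappa> "-1/2" 1] by simp
  finally have eq: "(theta + 1) * om powr (1/(p-1)) * t powr q * bb powr q = (theta + 1) * \<kappa> powr (1/2)" .
  have "\<kappa> powr (1/2) < 1" using powr_less_mono2[of "1/2" \<kappa> 1] k0 k1 by simp
  then show "(theta + 1) * om powr (1/(p-1)) * t powr q * bb powr q < theta + 1"
    unfolding eq using th by simp
  show "0 \<le> (theta + 1) * om powr (1/(p-1)) * t powr q * bb powr q"
    unfolding eq using th by simp
qed

lemma dom_fun:
  fixes u D :: "real \<Rightarrow> real" and p R r0 del mu mu' :: real
  assumes p: "p > 1" and r0: "0 < r0" "r0 < R"
    and Dc: "continuous_on {0..R} D"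
    and uD: "\<forall>x\<in>{0..R}. (u has_real_derivative D x) (at x within {0..R})"
    and uR: "u R = 0" and om: "omega (p-1) > 0"
    and A2: "(\<integral>\<^sup>+ x. ennreal (\<bar>deriv u x\<bar> powr p) \<partial>lam R (p-1)) \<le> 2"
    and Ad: "\<And>a b. 0 < a \<Longrightarrow> a < b \<Longrightarrow> b \<le> r0 \<Longrightarrow>
              (\<integral>\<^sup>+ x. ennreal (\<bar>deriv u x\<bar> powr p) * indicator {a..b} x \<partial>lam R (p-1)) \<le> ennreal (1 - del/2)"
    and d: "0 < del" "del \<le> 1" and mu: "0 \<le> mu'" "mu' \<le> mu"
    and t: "t > 1"
  defines "K \<equiv> (2 / omega (p-1)) powr (1/p) * ln (R/r0) powr (1 - 1/p)"
  defines "bb \<equiv> ((1 - del/2) / omega (p-1)) powr (1/p)"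
  defines "q \<equiv> p/(p-1)"
  assumes r: "r \<in> {0<..<R}"
  shows "exp (mu' * \<bar>u r\<bar> powr q) \<le> exp (mu * (K*t/(t-1)) powr q)
           + r0 powr (mu * t powr q * bb powr q) * r powr (-(mu * t powr q * bb powr q))"
proof -
  have gD: "\<And>x. x \<in> {0<..<R} \<Longrightarrow> deriv u x = D x" using deriv_eq(1) uD by blast
  have gm: "deriv u \<in> borel_measurable (lebesgue_on {0<..<R})" by (rule g_meas[OF Dc gD])
  have q: "q > 0" using p by (simp add: q_def)
  have q1: "1/q = 1 - 1/p" using p by (simp add: q_def field_simps)
  have e0: "1 - 1/p \<ge> 0" using p by simp
  have h1: "\<bar>u y\<bar> \<le> K" if y: "r0 \<le> y" "y < R" for y
  proof -
    have "(\<integral>\<^sup>+ x. ennreal (\<bar>deriv u x\<bar> powr p) * indicator {y..R} x \<partial>lam R (p-1))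
        \<le> (\<integral>\<^sup>+ x. ennreal (\<bar>deriv u x\<bar> powr p) \<partial>lam R (p-1))"
      by (intro nn_integral_mono) (auto simp: indicator_def)
    also have "\<dots> \<le> ennreal 2" using A2 by simp
    finally have bnd: "(\<integral>\<^sup>+ x. ennreal (\<bar>deriv u x\<bar> powr p) * indicator {y..R} x \<partial>lam R (p-1)) \<le> ennreal 2" .
    have "\<bar>u y\<bar> \<le> \<bar>u R\<bar> + (2 / omega (p-1)) powr (1/p) * ln (R/y) powr (1 - 1/p)"
      by (rule ptbound[OF p _ y(2) _ Dc uD gD gm om _ bnd]) (use y r0 in auto)
    also have "\<dots> \<le> K"
    proof -
      have "ln (R/y) \<le> ln (R/r0)" using y r0 by (simp add: divide_left_mono)
      moreover have "0 \<le> ln (R/y)" using y r0 by simp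
      ultimately have "ln (R/y) powr (1 - 1/p) \<le> ln (R/r0) powr (1 - 1/p)"
        using e0 by (intro powr_mono2) auto
      then show ?thesis unfolding K_def using uR by (simp add: mult_left_mono)
    qed
    finally show ?thesis .
  qed
  have h2: "\<bar>u y\<bar> \<le> K + bb * ln (r0/y) powr (1/q)" if y: "0 < y" "y < r0" for y
  proof -
    have bnd: "(\<integral>\<^sup>+ x. ennreal (\<bar>deriv u x\<bar> powr p) * indicator {y..r0} x \<partial>lam R (p-1)) \<le> ennreal (1 - del/2)"
      by (rule Ad) (use y in auto)
    have "\<bar>u y\<bar> \<le> \<bar>u r0\<bar> + ((1 - del/2) / omega (p-1)) powr (1/p) * ln (r0/y) powr (1 - 1/p)"
      by (rule ptbound[OF p y(1) y(2) _ Dc uD gD gm om _ bnd]) (use r0 d in auto)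
    then show ?thesis using h1[of r0] r0 by (simp add: bb_def q1)
  qed
  have K0: "K \<ge> 0" unfolding K_def by simp
  have bb0: "bb \<ge> 0" unfolding bb_def by simp
  show ?thesis
    by (rule dom_bound[OF q K0 bb0 t mu _ r0(1)]) (use r h1 h2 in auto)
qed

theorem lemma3p2:
  fixes p alpha theta R nu :: real
    and eps :: "nat \<Rightarrow> real"
    and u :: "nat \<Rightarrow> real \<Rightarrow> real"
    and u0 :: "real \<Rightarrow> real"
  assumes "p \<ge> 2" and "alpha = p - 1" and "0 < R" and "theta \<ge> alpha"
    and "0 \<le> nu" and "nu < lambda_const p R alpha theta"
    and eps_range: "\<And>n. 0 < eps n \<and> eps n < mu_const alpha theta"
    and eps_lim: "eps \<longlonglongrightarrow> 0"
    and uX: "\<And>n. u n \<in> X0 p R alpha theta"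
    and uC1: "\<And>n. \<exists>D. continuous_on {0..R} D \<and>
                 (\<forall>x\<in>{0..R}. (u n has_real_derivative D x) (at x within {0..R}))"
    and unonneg: "\<And>n. \<forall>x\<in>{0..R}. u n x \<ge> 0"
    and uH: "\<And>n. H p R alpha theta nu (u n) = 1"
    and umax: "\<And>n. TM_integral p R theta (mu_const alpha theta - eps n) (u n)
                      = S_eps p R alpha theta nu (eps n)"
    and weak: "weak_conv_X p R alpha theta u u0"
    and Lq: "\<And>q. q > 1 \<Longrightarrow> (\<lambda>n. pnorm_pow (lam R theta) q (\<lambda>r. u n r - u0 r)) \<longlonglongrightarrow> 0"
    and ae: "AE r in lam R theta. (\<lambda>n. u n r) \<longlonglongrightarrow> u0 r"
    and u0_zero: "\<forall>r\<in>{0<..<R}. u0 r = 0"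
  shows "(\<forall>n. H p R alpha theta nu (u n) = 1)
       \<and> weak_conv_X p R alpha theta u (\<lambda>r. 0)
       \<and> (\<forall>r0>0. (\<lambda>n. \<integral>\<^sup>+ r. ennreal (\<bar>deriv (u n) r\<bar> powr p) * indicator {r0<..<R} r \<partial>lam R alpha)
                    \<longlonglongrightarrow> 0)"
proof (intro conjI allI impI)
  have p1: "p > 1" using assms(1) by simp
  have al: "alpha = p - 1" by (rule assms(2))
  have R: "0 < R" by (rule assms(3))
  have nu0: "0 \<le> nu" by (rule assms(5))
  have om: "omega (p-1) > 0" using p1 by (intro omega_pos) simp
  have th0: "theta \<ge> 0" using assms(4) al p1 by simp
  have omt: "omega theta > 0" using assms(4) al p1 by (intro omega_pos) simp
  define mu where "mu = mu_const alpha theta"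
  have mu_eq: "mu = (theta + 1) * omega (p-1) powr (1/(p-1))" by (simp add: mu_def mu_const_def al)
  have mu_pos: "mu > 0" using mu_eq th0 om by simp
  define q where "q = p/(p-1)"
  have q: "q > 0" using p1 by (simp add: q_def)
  show "H p R alpha theta nu (u n) = 1" for n by (rule uH)
  show "weak_conv_X p R alpha theta u (\<lambda>r. 0)"
    unfolding weak_conv_X_def
  proof (intro allI impI)
    fix T :: "(real \<Rightarrow> real) \<Rightarrow> real"
    assume hT: "(\<forall>f\<in>X0 p R alpha theta. \<forall>g\<in>X0 p R alpha theta. \<forall>a b. T (\<lambda>r. a * f r + b * g r) = a * T f + b * T g)
        \<and> (\<exists>C. \<forall>f\<in>X0 p R alpha theta. \<bar>T f\<bar> \<le> C * Xnorm p R alpha theta f)"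
    then obtain C where C: "\<forall>f\<in>X0 p R alpha theta. \<bar>T f\<bar> \<le> C * Xnorm p R alpha theta f" by blast
    have z1: "\<forall>r\<in>{0<..<R}. (\<lambda>r::real. 0::real) r = 0" by simp
    have "\<bar>T u0\<bar> \<le> C * Xnorm p R alpha theta u0" using C zero_fun(2)[OF R u0_zero] by blast
    then have Tu0: "T u0 = 0" using zero_fun(3)[OF R u0_zero] by simp
    have "\<bar>T (\<lambda>r. 0)\<bar> \<le> C * Xnorm p R alpha theta (\<lambda>r. 0)" using C zero_fun(2)[OF R z1] by blast
    then have T0: "T (\<lambda>r. 0) = 0" using zero_fun(3)[OF R z1] by simp
    have "(\<lambda>n. T (u n)) \<longlonglongrightarrow> T u0" using weak hT unfolding weak_conv_X_def by blast
    then show "(\<lambda>n. T (u n)) \<longlonglongrightarrow> T (\<lambda>r. 0)" using Tu0 T0 by simp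
  qed
  fix r0 :: real assume r0: "r0 > 0"
  define I where "I n = (\<integral>\<^sup>+ r. ennreal (\<bar>deriv (u n) r\<bar> powr p) * indicator {r0<..<R} r \<partial>lam R alpha)" for n
  show "(\<lambda>n. \<integral>\<^sup>+ r. ennreal (\<bar>deriv (u n) r\<bar> powr p) * indicator {r0<..<R} r \<partial>lam R alpha) \<longlonglongrightarrow> 0"
  proof (cases "r0 < R")
    case False
    then have "{r0<..<R} = {}" by auto
    then show ?thesis by simp
  next
    case r0R: True
    show ?thesis
    proof (rule ccontr)
      assume nl: "\<not> ?thesis"
      have "\<exists>e>0. \<exists>\<^sub>F n in sequentially. e \<le> I n"
      proof (rule ccontr)
        assume "\<not> (\<exists>e>0. \<exists>\<^sub>F n in sequentially. e \<le> I n)"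
        then have "\<forall>e>0. \<forall>\<^sub>F n in sequentially. I n < e"
          by (auto simp: not_frequently not_le) (metis not_less_zero)
        then have "I \<longlonglongrightarrow> 0" by (simp add: order_tendsto_iff)
        then show False using nl unfolding I_def[abs_def] by simp
      qed
      then obtain e where e: "e > 0" and fe: "\<exists>\<^sub>F n in sequentially. e \<le> I n" by blast
      define del where "del = (if e = \<infinity> then 1 else min 1 (enn2real e))"
      have d: "0 < del" "del \<le> 1" using e by (auto simp: del_def enn2real_positive_iff less_top)
      have de: "ennreal del \<le> e"
      proof (cases "e = \<infinity>")
        case False
        then have "ennreal del \<le> ennreal (enn2real e)" by (simp add: del_def)
        then show ?thesis using False by (simp add: ennreal_enn2real_if)
      qed (simp add: del_def)
      have "\<exists>\<^sub>F n in sequentially. ennreal del \<le> I n"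
        using fe by (rule frequently_elim1) (use de in auto)
      then have "infinite {n. ennreal del \<le> I n}"
        by (simp add: frequently_cofinite[symmetric] cofinite_eq_sequentially)
      then obtain \<phi> :: "nat \<Rightarrow> nat" where \<phi>: "strict_mono \<phi>" "\<And>n. ennreal del \<le> I (\<phi> n)"
        using infinite_enumerate by blast
      have "\<forall>n. \<exists>D. continuous_on {0..R} D \<and> (\<forall>x\<in>{0..R}. (u n has_real_derivative D x) (at x within {0..R}))"
        using uC1 by blast
      then obtain Df where Df: "\<And>n. continuous_on {0..R} (Df n)"
        "\<And>n. \<forall>x\<in>{0..R}. (u n has_real_derivative Df n x) (at x within {0..R})"
        by metis
      have uR: "u n R = 0" for n
        using uR0[OF R Df(2)[of n]] uX[of n] by (simp add: X0_def)
      have ucont: "continuous_on {0..R} (u n)" for n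
        using Df(2)[of n] by (intro DERIV_continuous_on) auto
      have umeas: "u n \<in> borel_measurable (lebesgue_on {0<..<R})" for n
        by (rule g_meas[OF ucont[of n]]) simp
      define B where "B n = enn2real (pnorm_pow (lam R theta) p (u n))" for n
      have pn_eq: "pnorm_pow (lam R theta) p (\<lambda>r. u n r - u0 r) = pnorm_pow (lam R theta) p (u n)" for n
        unfolding pnorm_pow_def using u0_zero by (intro nn_integral_cong) (simp add: space_lam)
      have "(\<lambda>n. pnorm_pow (lam R theta) p (u n)) \<longlonglongrightarrow> ennreal 0"
        using Lq[OF p1] pn_eq by simp
      then have Blim: "B \<longlonglongrightarrow> 0" unfolding B_def[abs_def] by (intro tendsto_enn2real) auto
      have "(\<lambda>n. nu * B n) \<longlonglongrightarrow> 0" using tendsto_mult_right_zero[OF Blim, of nu] by simp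
      then have ev1: "\<forall>\<^sub>F n in sequentially. nu * B n < del/2" using d by (intro order_tendstoD(2)) auto
      have ev2: "\<forall>\<^sub>F n in sequentially. eps n < mu/2" using eps_lim mu_pos by (intro order_tendstoD(2)) auto
      have "\<forall>\<^sub>F n in sequentially. nu * B (\<phi> n) < del/2 \<and> eps (\<phi> n) < mu/2"
        using eventually_subseq[OF \<phi>(1) eventually_conj[OF ev1 ev2]] .
      then obtain N where N: "\<And>n. n \<ge> N \<Longrightarrow> nu * B (\<phi> n) < del/2 \<and> eps (\<phi> n) < mu/2"
        by (auto simp: eventually_sequentially)
      define \<psi> where "\<psi> n = \<phi> (n + N)" for n
      have \<psi>: "strict_mono \<psi>" using \<phi>(1) by (simp add: strict_mono_def \<psi>_def)
      have \<psi>B: "nu * B (\<psi> n) < del/2" and \<psi>e: "eps (\<psi> n) < mu/2" for n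
        using N[of "n + N"] by (auto simp: \<psi>_def)
      have \<psi>I: "ennreal del \<le> I (\<psi> n)" for n using \<phi>(2) by (simp add: \<psi>_def)
      have Afin: "(\<integral>\<^sup>+ x. ennreal (\<bar>deriv (u n) x\<bar> powr p) \<partial>lam R (p-1))
                    = ennreal (enn2real (pnorm_pow (lam R alpha) p (deriv (u n))))" for n
        using uX[of n] by (simp add: X0_def pnorm_pow_def al less_top ennreal_enn2real_if)
      have Ab: "enn2real (pnorm_pow (lam R alpha) p (deriv (u n))) \<le> 1 + nu * B n" for n
        using Hbound[OF _ uH[of n]] p1 by (simp add: B_def)
      have A2: "(\<integral>\<^sup>+ x. ennreal (\<bar>deriv (u (\<psi> n)) x\<bar> powr p) \<partial>lam R (p-1)) \<le> 2" for n
      proof -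
        have "enn2real (pnorm_pow (lam R alpha) p (deriv (u (\<psi> n)))) \<le> 2"
          using Ab[of "\<psi> n"] \<psi>B[of n] d by simp
        then show ?thesis unfolding Afin by (metis ennreal_leI ennreal_numeral)
      qed
      have Ad: "(\<integral>\<^sup>+ x. ennreal (\<bar>deriv (u (\<psi> n)) x\<bar> powr p) * indicator {a..b} x \<partial>lam R (p-1)) \<le> ennreal (1 - del/2)"
        if ab: "0 < a" "a < b" "b \<le> r0" for n a b
      proof -
        define X where "X = (\<integral>\<^sup>+ x. ennreal (\<bar>deriv (u (\<psi> n)) x\<bar> powr p) * indicator {a..b} x \<partial>lam R (p-1))"
        have gD: "\<And>x. x \<in> {0<..<R} \<Longrightarrow> deriv (u (\<psi> n)) x = Df (\<psi> n) x" using deriv_eq(1) Df(2) by blast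
        have gm: "deriv (u (\<psi> n)) \<in> borel_measurable (lebesgue_on {0<..<R})" by (rule g_meas[OF Df(1) gD])
        have "X + I (\<psi> n) \<le> (\<integral>\<^sup>+ x. ennreal (\<bar>deriv (u (\<psi> n)) x\<bar> powr p) \<partial>lam R (p-1))"
          using split_le[OF gm ab(3), where a=a and p=p and s="p-1"] by (simp add: X_def I_def al)
        also have "\<dots> \<le> ennreal (1 + nu * B (\<psi> n))" unfolding Afin using Ab by (simp add: ennreal_leI)
        finally have "X + ennreal del \<le> ennreal (1 + nu * B (\<psi> n))"
          using \<psi>I[of n] by (meson add_left_mono order_trans)
        moreover have "X \<noteq> \<infinity>" using calculation by (auto simp: top_add top_unique)
        ultimately obtain Xr where Xr: "X = ennreal Xr" "Xr \<ge> 0" by (cases X) auto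
        have "ennreal (Xr + del) \<le> ennreal (1 + nu * B (\<psi> n))"
          using \<open>X + ennreal del \<le> _\<close> Xr d by (simp add: ennreal_plus)
        then have "Xr + del \<le> 1 + nu * B (\<psi> n)"
          using nu0 by (subst (asm) ennreal_le_iff) (auto simp: B_def)
        then have "Xr \<le> 1 - del/2" using \<psi>B[of n] by simp
        then show ?thesis unfolding X_def[symmetric] Xr by (rule ennreal_leI)
      qed
      define \<kappa> where "\<kappa> = (1 - del/2) powr (1/(p-1))"
      define t where "t = \<kappa> powr (-1/(2*q))"
      define bb where "bb = ((1 - del/2) / omega (p-1)) powr (1/p)"
      define K where "K = (2 / omega (p-1)) powr (1/p) * ln (R/r0) powr (1 - 1/p)"
      define beta where "beta = mu * t powr q * bb powr q"
      define C1 where "C1 = exp (mu * (K*t/(t-1)) powr q)"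
      have th1: "theta + 1 > 0" using th0 by simp
      have t1: "t > 1" and beta_lt: "beta < theta + 1" and beta0: "0 \<le> beta"
        using beta_alg[OF p1 om th1 d] unfolding t_def \<kappa>_def q_def beta_def mu_eq bb_def by auto
      define wf where "wf r = C1 + r0 powr beta * r powr (-beta)" for r
      have C1: "C1 \<ge> 1" unfolding C1_def using mu_pos by simp
      have dom: "exp ((mu - eps (\<psi> n)) * \<bar>u (\<psi> n) r\<bar> powr q) \<le> wf r" if r: "r \<in> {0<..<R}" for n r
      proof -
        have "exp ((mu - eps (\<psi> n)) * \<bar>u (\<psi> n) r\<bar> powr q) \<le> exp (mu * (K*t/(t-1)) powr q)
           + r0 powr (mu * t powr q * bb powr q) * r powr (-(mu * t powr q * bb powr q))"
          unfolding K_def bb_def q_def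
          by (rule dom_fun[OF p1 r0 r0R Df(1) Df(2) uR om A2 Ad d _ _ t1 r])
             (use eps_range[of "\<psi> n"] mu_def in auto)
        then show ?thesis by (simp add: wf_def C1_def beta_def)
      qed
      have wfin: "(\<integral>\<^sup>+ r. ennreal (wf r) \<partial>lam R theta) < \<infinity>"
        unfolding wf_def using w_finite[OF R th0 beta0 beta_lt, of C1 r0] C1 omt by simp
      have wmeas: "(\<lambda>r. ennreal (wf r)) \<in> borel_measurable (lam R theta)"
      proof -
        have "continuous_on {0<..<R} wf" unfolding wf_def by (intro continuous_intros) auto
        then have "wf \<in> borel_measurable (lebesgue_on {0<..<R})"
          by (rule continuous_imp_measurable_on_sets_lebesgue) auto
        then show ?thesis by measurable
      qed
      define F where "F i x = ennreal (exp ((mu - eps (\<psi> i)) * \<bar>u (\<psi> i) x\<bar> powr q))" for i x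
      have Fmeas: "F i \<in> borel_measurable (lam R theta)" for i
        unfolding F_def using umeas[of "\<psi> i"] by measurable
      have conv: "(\<lambda>i. \<integral>\<^sup>+ x. F i x \<partial>lam R theta) \<longlonglongrightarrow> (\<integral>\<^sup>+ x. 1 \<partial>lam R theta)"
      proof (rule nn_integral_dominated_convergence[OF Fmeas _ wmeas _ wfin])
        show "(\<lambda>x. 1::ennreal) \<in> borel_measurable (lam R theta)" by simp
        show "AE x in lam R theta. F j x \<le> ennreal (wf x)" for j
          by (rule AE_I2) (auto simp: F_def space_lam intro!: ennreal_leI dom)
        show "AE x in lam R theta. (\<lambda>i. F i x) \<longlonglongrightarrow> 1"
          using ae AE_space
        proof eventually_elim
          case (elim x)
          then have "(\<lambda>n. u n x) \<longlonglongrightarrow> 0" using u0_zero by (simp add: space_lam)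
          then have "(\<lambda>n. u (\<psi> n) x) \<longlonglongrightarrow> 0" using LIMSEQ_subseq_LIMSEQ[OF _ \<psi>] by (simp add: o_def)
          then have "(\<lambda>n. \<bar>u (\<psi> n) x\<bar>) \<longlonglongrightarrow> 0" by (simp add: tendsto_rabs_zero)
          then have "(\<lambda>n. \<bar>u (\<psi> n) x\<bar> powr q) \<longlonglongrightarrow> 0"
            using q by (intro tendsto_zero_powrI) auto
          moreover have "(\<lambda>n. mu - eps (\<psi> n)) \<longlonglongrightarrow> mu - 0"
            using LIMSEQ_subseq_LIMSEQ[OF eps_lim \<psi>] by (intro tendsto_diff) (auto simp: o_def)
          ultimately have "(\<lambda>n. (mu - eps (\<psi> n)) * \<bar>u (\<psi> n) x\<bar> powr q) \<longlonglongrightarrow> (mu - 0) * 0"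
            by (intro tendsto_mult)
          then have "(\<lambda>n. exp ((mu - eps (\<psi> n)) * \<bar>u (\<psi> n) x\<bar> powr q)) \<longlonglongrightarrow> exp 0"
            by (intro tendsto_exp) simp
          then have "(\<lambda>n. ennreal (exp ((mu - eps (\<psi> n)) * \<bar>u (\<psi> n) x\<bar> powr q))) \<longlonglongrightarrow> ennreal (exp 0)"
            by (rule tendsto_ennrealI)
          then show ?case unfolding F_def by simp
        qed
      qed
      define V where "V = emeasure (lam R theta) (space (lam R theta))"
      have conv2: "(\<lambda>i. \<integral>\<^sup>+ x. F i x \<partial>lam R theta) \<longlonglongrightarrow> V" using conv by (simp add: V_def)
      have Vfin: "V < \<infinity>"
      proof -
        have "V = (\<integral>\<^sup>+ x. 1 \<partial>lam R theta)" by (simp add: V_def)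
        also have "\<dots> \<le> (\<integral>\<^sup>+ r. ennreal (wf r) \<partial>lam R theta)"
          using C1 by (intro nn_integral_mono) (auto simp: wf_def intro!: ennreal_leI add_increasing2)
        finally show ?thesis using wfin by simp
      qed
      define W where "W = TM_integral p R theta (mu/2) (u 0)"
      have u0in: "u 0 \<in> {v \<in> X0 p R alpha theta. H p R alpha theta nu v \<le> 1}" using uX uH by simp
      have low: "W \<le> (\<integral>\<^sup>+ x. F i x \<partial>lam R theta)" for i
      proof -
        have "W \<le> TM_integral p R theta (mu - eps (\<psi> i)) (u 0)"
          unfolding W_def TM_integral_def using \<psi>e[of i]
        proof (intro nn_integral_mono ennreal_leI exp_mono mult_right_mono)
          show "mu / 2 \<le> mu - eps (\<psi> i)" using \<psi>e[of i] by simp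
        qed simp
        also have "\<dots> \<le> S_eps p R alpha theta nu (eps (\<psi> i))"
          unfolding S_eps_def mu_def by (rule SUP_upper[OF u0in])
        also have "\<dots> = TM_integral p R theta (mu - eps (\<psi> i)) (u (\<psi> i))"
          using umax[of "\<psi> i"] by (simp add: mu_def)
        also have "\<dots> = (\<integral>\<^sup>+ x. F i x \<partial>lam R theta)"
          by (simp add: TM_integral_def F_def q_def)
        finally show ?thesis .
      qed
      have WV: "W \<le> V"
        using tendsto_lowerbound[OF conv2] low by (simp add: always_eventually)
      have "\<exists>x0\<in>{0<..<R}. u 0 x0 > 0"
      proof (rule ccontr)
        assume "\<not> ?thesis"
        then have z: "\<forall>r\<in>{0<..<R}. u 0 r = 0" using unonneg[of 0]
          by (metis greaterThanLessThan_iff atLeastAtMost_iff less_imp_le linorder_neqE_linordered_idom not_less)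
        have "H p R alpha theta nu (u 0) = 0"
          unfolding H_def using zero_fun(4,5)[OF R z] by simp
        then show False using uH[of 0] by simp
      qed
      then obtain x0 where x0: "x0 \<in> {0<..<R}" "u 0 x0 > 0" by blast
      have "V < W"
        unfolding V_def W_def TM_integral_def q_def[symmetric]
        by (rule pos_gap[OF R ucont x0]) (use mu_pos th0 omt q Vfin V_def in auto)
      then show False using WV by simp
    qed
  qed
qed

end
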